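(* Let $h\in\mathcal H$ and $\varphi(\underline{x})=h(x_0,x_1)$ on $X=[0,1]^{\mathbb N_0}$. Let $a,b\in\mathrm{m}_h$ belong to the same connected component $C(a)$ of $\mathrm{m}_h$, and suppose that \[\lim_{\delta\to0^+}\left(\frac{h(z+\delta,z)-h(z,z)}{\delta}+\frac{h(z,z+\delta)-h(z,z)}{\delta}\right)=0\quad\text{for every }z\in C(a).\] Then $H_\varphi(a^\infty,b^\infty)+H_\varphi(b^\infty,a^\infty)=0$, i.e. $a^\infty\sim_\varphi b^\infty$.
   Context: $X=[0,1]^{\mathbb N_0}$ with metric $d_X(\underline{x},\underline{y})=\sum_{i\ge0}|x_i-y_i|/2^{i+1}$ and shift $\sigma(\underline{x})_i=x_{i+1}$. $\alpha_\varphi=\inf_\mu\int\varphi\,d\mu$ over $\sigma$-invariant Borel probability measures. $B(\underline{x},\underline{y},n;\varepsilon)=\{\underline{z}: d_X(\underline{x},\underline{z})<\varepsilon,\ d_X(\sigma^n\underline{z},\underline{y})<\varepsilon\}$; Peierls barrier $H_\varphi(\underline{x},\underline{y})=\lim_{\varepsilon\to0}\liminf_{n\to\infty}\inf\{\sum_{i=0}^{n-1}(\varphi(\sigma^i\underline{z})-\alpha_\varphi): \underline{z}\in B(\underline{x},\underline{y},n;\varepsilon)\}\in\mathbb R\cup\{+\infty\}$. $h^*=\min_x h(x,x)$, $\mathrm{m}_h=\{a: h(a,a)=h^*\}$, $a^\infty=aaa\ldots$. A finite sequence $(x_k,\dots,x_l)$ is minimal (for $h$) if $\sum_{i=k}^{l-1}h(x_i,x_{i+1})\le\sum_{i=k}^{l-1}h(y_i,y_{i+1})$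 for every $(y_k,\dots,y_l)$ in $[0,1]$ with the same endpoints. $\mathcal H$ is the set of Lipschitz $h:[0,1]^2\to\mathbb R$ such that (H3) if $\xi_1<\xi_2$, $\eta_1<\eta_2$ then $h(\xi_1,\eta_1)+h(\xi_2,\eta_2)<h(\xi_1,\eta_2)+h(\xi_2,\eta_1)$; and (H4) if $(x_{-1},x_0,x_1)\ne(x'_{-1},x_0,x'_1)$ are both minimal then $(x_{-1}-x'_{-1})(x_1-x'_1)<0$. *)

theory Defs
  imports "HOL-Probability.Probability"
begin

definition Xsp :: "(nat \<Rightarrow> real) set" where
  "Xsp = {x. \<forall>i. x i \<in> {0..1}}"

definition dX :: "(nat \<Rightarrow> real) \<Rightarrow> (nat \<Rightarrow> real) \<Rightarrow> real" where
  "dX x y = (\<Sum>i. \<bar>x i - y i\<bar> / 2 ^ (i + 1))"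

definition shift :: "(nat \<Rightarrow> real) \<Rightarrow> (nat \<Rightarrow> real)" where
  "shift x = (\<lambda>i. x (Suc i))"

definition opensX :: "(nat \<Rightarrow> real) set set" where
  "opensX = {U. U \<subseteq> Xsp \<and> (\<forall>x\<in>U. \<exists>e>0. \<forall>y\<in>Xsp. dX x y < e \<longrightarrow> y \<in> U)}"

definition borelX :: "(nat \<Rightarrow> real) measure" where
  "borelX = sigma Xsp opensX"

definition inv_measures :: "(nat \<Rightarrow> real) measure set" where
  "inv_measures = {M. sets M = sets borelX \<and> prob_space M \<and> shift \<in> measurable M M \<and>
      (\<forall>A\<in>sets M. emeasure M (shift -` A \<inter> space M) = emeasure M A)}"

definition alpha :: "((nat \<Rightarrow> real) \<Rightarrow> real) \<Rightarrow> real" where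
  "alpha \<phi> = Inf ((\<lambda>M. integral\<^sup>L M \<phi>) ` inv_measures)"

definition Bset :: "(nat \<Rightarrow> real) \<Rightarrow> (nat \<Rightarrow> real) \<Rightarrow> nat \<Rightarrow> real \<Rightarrow> (nat \<Rightarrow> real) set" where
  "Bset x y n \<epsilon> = {z \<in> Xsp. dX x z < \<epsilon> \<and> dX ((shift ^^ n) z) y < \<epsilon>}"

definition peierls :: "((nat \<Rightarrow> real) \<Rightarrow> real) \<Rightarrow> (nat \<Rightarrow> real) \<Rightarrow> (nat \<Rightarrow> real) \<Rightarrow> ereal" where
  "peierls \<phi> x y = Lim (at_right (0::real)) (\<lambda>\<epsilon>.
      liminf (\<lambda>n. Inf ((\<lambda>z. ereal (\<Sum>i<n. \<phi> ((shift ^^ i) z) - alpha \<phi>)) ` Bset x y n \<epsilon>)))"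

definition action :: "(real \<Rightarrow> real \<Rightarrow> real) \<Rightarrow> real list \<Rightarrow> real" where
  "action h xs = (\<Sum>i<length xs - 1. h (xs ! i) (xs ! Suc i))"

definition minimal_seq :: "(real \<Rightarrow> real \<Rightarrow> real) \<Rightarrow> real list \<Rightarrow> bool" where
  "minimal_seq h xs \<longleftrightarrow> xs \<noteq> [] \<and> set xs \<subseteq> {0..1} \<and>
     (\<forall>ys. length ys = length xs \<and> set ys \<subseteq> {0..1} \<and> hd ys = hd xs \<and> last ys = last xs
        \<longrightarrow> action h xs \<le> action h ys)"

definition classH :: "(real \<Rightarrow> real \<Rightarrow> real) set" where
  "classH = {h.
     (\<exists>L. \<forall>x\<in>{0..1}. \<forall>y\<in>{0..1}. \<forall>x'\<in>{0..1}. \<forall>y'\<in>{0..1}.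
         \<bar>h x y - h x' y'\<bar> \<le> L * (\<bar>x - x'\<bar> + \<bar>y - y'\<bar>)) \<and>
     (\<forall>\<xi>1\<in>{0..1}. \<forall>\<xi>2\<in>{0..1}. \<forall>\<eta>1\<in>{0..1}. \<forall>\<eta>2\<in>{0..1}.
         \<xi>1 < \<xi>2 \<longrightarrow> \<eta>1 < \<eta>2 \<longrightarrow> h \<xi>1 \<eta>1 + h \<xi>2 \<eta>2 < h \<xi>1 \<eta>2 + h \<xi>2 \<eta>1) \<and>
     (\<forall>xm x0 x1 xm' x1'. minimal_seq h [xm, x0, x1] \<longrightarrow> minimal_seq h [xm', x0, x1'] \<longrightarrow>
         (xm, x1) \<noteq> (xm', x1') \<longrightarrow> (xm - xm') * (x1 - x1') < 0)}"

definition hstar :: "(real \<Rightarrow> real \<Rightarrow> real) \<Rightarrow> real" where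
  "hstar h = Inf ((\<lambda>x. h x x) ` {0..1})"

definition mset_h :: "(real \<Rightarrow> real \<Rightarrow> real) \<Rightarrow> real set" where
  "mset_h h = {a \<in> {0..1}. h a a = hstar h}"

definition const_seq :: "real \<Rightarrow> (nat \<Rightarrow> real)" where
  "const_seq a = (\<lambda>_. a)"

end

theory Submission
  imports Defs
begin

lemma classH_lip:
  assumes "h \<in> classH"
  obtains L where "L \<ge> 0" "\<And>x y x' y'. x \<in> {0..1} \<Longrightarrow> y \<in> {0..1} \<Longrightarrow> x' \<in> {0..1} \<Longrightarrow> y' \<in> {0..1} \<Longrightarrow>
      \<bar>h x y - h x' y'\<bar> \<le> L * (\<bar>x - x'\<bar> + \<bar>y - y'\<bar>)"
proof -
  from assms obtain L where L: "\<forall>x\<in>{0..1}. \<forall>y\<in>{0..1}. \<forall>x'\<in>{0..1}. \<forall>y'\<in>{0..1}.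
         \<bar>h x y - h x' y'\<bar> \<le> L * (\<bar>x - x'\<bar> + \<bar>y - y'\<bar>)" unfolding classH_def by blast
  have 01: "(0::real) \<in> {0..1}" "(1::real) \<in> {0..1}" by auto
  have "\<bar>h 0 0 - h 1 0\<bar> \<le> L * (\<bar>0 - 1\<bar> + \<bar>0 - 0\<bar>)" using L 01 by blast
  hence "L \<ge> 0" by simp
  thus ?thesis using that L by blast
qed

lemma classH_sub:
  assumes "h \<in> classH" "p \<in> {0..1}" "s \<in> {0..1}" "m \<in> {0..1}" "p \<le> m" "s \<le> m"
  shows "h p s + h m m \<le> h p m + h m s"
proof -
  have H3: "\<forall>\<xi>1\<in>{0..1}. \<forall>\<xi>2\<in>{0..1}. \<forall>\<eta>1\<in>{0..1}. \<forall>\<eta>2\<in>{0..1}.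
         \<xi>1 < \<xi>2 \<longrightarrow> \<eta>1 < \<eta>2 \<longrightarrow> h \<xi>1 \<eta>1 + h \<xi>2 \<eta>2 < h \<xi>1 \<eta>2 + h \<xi>2 \<eta>1"
    using assms(1) unfolding classH_def by blast
  show ?thesis
  proof (cases "p = m \<or> s = m")
    case True thus ?thesis by auto
  next
    case False
    hence "p < m" "s < m" using assms by auto
    thus ?thesis using H3 assms(2-4) by force
  qed
qed

lemma hstar_le:
  assumes "h \<in> classH" "x \<in> {0..1}"
  shows "hstar h \<le> h x x"
proof -
  obtain L where L: "L \<ge> 0" "\<And>x y x' y'. x \<in> {0..1} \<Longrightarrow> y \<in> {0..1} \<Longrightarrow> x' \<in> {0..1} \<Longrightarrow> y' \<in> {0..1} \<Longrightarrow>
      \<bar>h x y - h x' y'\<bar> \<le> L * (\<bar>x - x'\<bar> + \<bar>y - y'\<bar>)" using classH_lip[OF assms(1)] by blast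
  have "bdd_below ((\<lambda>x. h x x) ` {0..1})"
  proof (rule bdd_belowI2)
    fix x :: real assume x: "x \<in> {0..1}"
    have "\<bar>h x x - h 0 0\<bar> \<le> L * (\<bar>x - 0\<bar> + \<bar>x - 0\<bar>)" using L(2)[of x x 0 0] x by auto
    also have "\<dots> \<le> L * 2" using x L(1) by (intro mult_left_mono) auto
    finally show "h 0 0 - 2 * L \<le> h x x" by linarith
  qed
  thus ?thesis unfolding hstar_def using assms(2) by (intro cInf_lower) auto
qed

fun pc :: "(real \<Rightarrow> real \<Rightarrow> real) \<Rightarrow> real list \<Rightarrow> real" where
  "pc h [] = 0" | "pc h [x] = 0" | "pc h (x # y # zs) = h x y + pc h (y # zs)"

lemma pc_append:
  "pc h (xs @ ys) = pc h xs + pc h ys + (if xs \<noteq> [] \<and> ys \<noteq> [] then h (last xs) (hd ys) else 0)"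
proof (induction h xs rule: pc.induct)
  case (1 h) show ?case by simp
next
  case (2 h x) show ?case by (cases ys) auto
next
  case (3 h x y zs) thus ?case by simp
qed

definition cyc :: "(real \<Rightarrow> real \<Rightarrow> real) \<Rightarrow> real list \<Rightarrow> real" where
  "cyc h xs = pc h xs + h (last xs) (hd xs)"

lemma cyc_bound:
  assumes "h \<in> classH"
  shows "xs \<noteq> [] \<Longrightarrow> set xs \<subseteq> {0..1} \<Longrightarrow> real (length xs) * hstar h \<le> cyc h xs"
proof (induction "length xs" arbitrary: xs rule: less_induct)
  case less
  show ?case
  proof (cases "length xs = 1")
    case True
    then obtain x where xs: "xs = [x]" by (cases xs) auto
    thus ?thesis using less.prems hstar_le[OF assms, of x] by (simp add: cyc_def)
  next
    case False
    define m where "m = Max (set xs)"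
    have m: "m \<in> set xs" using less.prems unfolding m_def by simp
    have mle: "\<And>y. y \<in> set xs \<Longrightarrow> y \<le> m" unfolding m_def by simp
    obtain as bs where xs: "xs = as @ m # bs" using split_list[OF m] by blast
    define ys where "ys = as @ bs"
    have ys: "ys \<noteq> []" "set ys \<subseteq> {0..1}" "length ys < length xs" "length xs = Suc (length ys)"
      using False less.prems unfolding ys_def xs by auto
    have IH: "real (length ys) * hstar h \<le> cyc h ys" using less.hyps ys by blast
    have m01: "m \<in> {0..1}" using m less.prems by auto
    have hm: "hstar h \<le> h m m" using hstar_le[OF assms m01] .
    have key: "cyc h ys + h m m \<le> cyc h xs"
    proof (cases "as = []")
      case True
      hence bs: "bs \<noteq> []" using ys unfolding ys_def by auto
      have i: "last bs \<in> set xs" "hd bs \<in> set xs" using bs unfolding xs by auto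
      have "h (last bs) (hd bs) + h m m \<le> h (last bs) m + h m (hd bs)"
        using classH_sub[OF assms, of "last bs" "hd bs" m] i mle m01 less.prems(2) by blast
      thus ?thesis using True bs unfolding xs ys_def cyc_def by (cases bs) auto
    next
      case asne: False
      show ?thesis
      proof (cases "bs = []")
        case True
        have i: "last as \<in> set xs" "hd as \<in> set xs" using asne unfolding xs by auto
        have "h (last as) (hd as) + h m m \<le> h (last as) m + h m (hd as)"
          using classH_sub[OF assms, of "last as" "hd as" m] i mle m01 less.prems(2) by blast
        thus ?thesis using True asne unfolding xs ys_def cyc_def by (simp add: pc_append)
      next
        case False
        have i: "last as \<in> set xs" "hd bs \<in> set xs" using asne False unfolding xs by auto
        have "h (last as) (hd bs) + h m m \<le> h (last as) m + h m (hd bs)"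
          using classH_sub[OF assms, of "last as" "hd bs" m] i mle m01 less.prems(2) by blast
        thus ?thesis using False asne unfolding xs ys_def cyc_def
          by (cases bs) (auto simp add: pc_append)
      qed
    qed
    show ?thesis using IH hm key ys(4) by (simp add: algebra_simps)
  qed
qed

lemma pc_map_upt: "pc h (map f [0..<Suc n]) = (\<Sum>i<n. h (f i) (f (Suc i)))"
proof (induction n)
  case (Suc n)
  have "map f [0..<Suc (Suc n)] = map f [0..<Suc n] @ [f (Suc n)]" by simp
  thus ?case using Suc by (simp only: pc_append) (simp add: last_map)
qed simp

lemma path_bound:
  assumes "h \<in> classH" "\<And>i. f i \<in> {0..1}" "L \<ge> 0"
    "\<And>x y x' y'. x \<in> {0..1} \<Longrightarrow> y \<in> {0..1} \<Longrightarrow> x' \<in> {0..1} \<Longrightarrow> y' \<in> {0..1} \<Longrightarrow>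
      \<bar>h x y - h x' y'\<bar> \<le> L * (\<bar>x - x'\<bar> + \<bar>y - y'\<bar>)"
  shows "real n * hstar h - L * \<bar>f n - f 0\<bar> \<le> (\<Sum>i<n. h (f i) (f (Suc i)))"
proof (cases n)
  case 0 thus ?thesis using assms(3) by simp
next
  case (Suc k)
  have "real (length (map f [0..<Suc k])) * hstar h \<le> cyc h (map f [0..<Suc k])"
    by (rule cyc_bound[OF assms(1)]) (use assms(2) in auto)
  hence "real (Suc k) * hstar h \<le> cyc h (map f [0..<Suc k])" by simp
  also have "\<dots> = (\<Sum>i<k. h (f i) (f (Suc i))) + h (f k) (f 0)"
  proof -
    have "hd (map f [0..<Suc k]) = f 0" by (simp del: upt_Suc add: upt_conv_Cons)
    moreover have "last (map f [0..<Suc k]) = f k" by simp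
    ultimately show ?thesis unfolding cyc_def pc_map_upt by simp
  qed
  finally have 1: "real (Suc k) * hstar h \<le> (\<Sum>i<k. h (f i) (f (Suc i))) + h (f k) (f 0)" .
  have "\<bar>h (f k) (f (Suc k)) - h (f k) (f 0)\<bar> \<le> L * (\<bar>f k - f k\<bar> + \<bar>f (Suc k) - f 0\<bar>)"
    using assms(2,4) by blast
  thus ?thesis using 1 Suc by simp
qed

lemma shift_pow: "(shift ^^ n) x = (\<lambda>i. x (i + n))"
  by (induction n arbitrary: x) (auto simp: shift_def funpow_Suc_right)

lemma Xsp_iff: "x \<in> Xsp \<longleftrightarrow> (\<forall>i. x i \<in> {0..1})"
  by (simp add: Xsp_def)

lemma shift_pow_Xsp: "x \<in> Xsp \<Longrightarrow> (shift ^^ n) x \<in> Xsp"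
  by (simp add: Xsp_iff shift_pow)

lemma dX_term_le: "x \<in> Xsp \<Longrightarrow> y \<in> Xsp \<Longrightarrow> \<bar>x i - y i\<bar> / 2 ^ (i + 1) \<le> (1/2) ^ Suc i"
proof -
  assume "x \<in> Xsp" "y \<in> Xsp"
  hence "\<bar>x i - y i\<bar> \<le> 1" by (auto simp: Xsp_iff abs_le_iff dest!: spec[of _ i])
  thus ?thesis by (simp add: divide_right_mono power_one_over)
qed

lemma dX_summable: "x \<in> Xsp \<Longrightarrow> y \<in> Xsp \<Longrightarrow> summable (\<lambda>i. \<bar>x i - y i\<bar> / 2 ^ (i + 1))"
  apply (rule summable_comparison_test'[where g="\<lambda>i. (1/2) ^ Suc i" and N=0])
  using power_half_series summable_def dX_term_le by auto

lemma dX_nonneg: "x \<in> Xsp \<Longrightarrow> y \<in> Xsp \<Longrightarrow> 0 \<le> dX x y"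
  unfolding dX_def by (rule suminf_nonneg[OF dX_summable]) auto

lemma dX_le1: "x \<in> Xsp \<Longrightarrow> y \<in> Xsp \<Longrightarrow> dX x y \<le> 1"
proof -
  assume a: "x \<in> Xsp" "y \<in> Xsp"
  have "dX x y \<le> (\<Sum>i. (1/2::real) ^ Suc i)"
    unfolding dX_def
    by (rule suminf_le) (use dX_term_le[OF a] dX_summable[OF a] power_half_series summable_def in auto)
  also have "\<dots> = 1" using power_half_series sums_unique by metis
  finally show ?thesis .
qed

lemma dX_self: "dX x x = 0"
  by (simp add: dX_def)

lemma dX_coord:
  assumes "x \<in> Xsp" "y \<in> Xsp"
  shows "\<bar>x i - y i\<bar> \<le> 2 ^ (i + 1) * dX x y"
proof -
  have "\<bar>x i - y i\<bar> / 2 ^ (i + 1) = (\<Sum>j\<in>{i}. \<bar>x j - y j\<bar> / 2 ^ (j + 1))" by simp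
  also have "\<dots> \<le> dX x y" unfolding dX_def
    by (rule sum_le_suminf[OF dX_summable[OF assms]]) auto
  finally show ?thesis by (simp add: field_simps)
qed

lemma dX_split:
  assumes "x \<in> Xsp" "y \<in> Xsp"
  shows "dX x y = (\<Sum>i<N. \<bar>x i - y i\<bar> / 2 ^ (i + 1)) + dX ((shift ^^ N) x) ((shift ^^ N) y) / 2 ^ N"
proof -
  have s: "summable (\<lambda>i. \<bar>x i - y i\<bar> / 2 ^ (i + 1))" by (rule dX_summable[OF assms])
  have "dX x y = (\<Sum>i. \<bar>x (i + N) - y (i + N)\<bar> / 2 ^ (i + N + 1)) + (\<Sum>i<N. \<bar>x i - y i\<bar> / 2 ^ (i + 1))"
    unfolding dX_def using suminf_split_initial_segment[OF s, of N] by simp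
  also have "(\<Sum>i. \<bar>x (i + N) - y (i + N)\<bar> / 2 ^ (i + N + 1)) = (\<Sum>i. (\<bar>x (i + N) - y (i + N)\<bar> / 2 ^ (i + 1)) / 2 ^ N)"
    by (simp add: power_add field_simps)
  also have "\<dots> = (\<Sum>i. \<bar>x (i + N) - y (i + N)\<bar> / 2 ^ (i + 1)) / 2 ^ N"
    apply (rule suminf_divide)
    using dX_summable[OF shift_pow_Xsp[OF assms(1)] shift_pow_Xsp[OF assms(2)], of N] by (simp add: shift_pow)
  finally show ?thesis by (simp add: dX_def shift_pow)
qed

lemma dX_shift_le:
  assumes "x \<in> Xsp" "y \<in> Xsp"
  shows "dX (shift x) (shift y) \<le> 2 * dX x y"
proof -
  have "dX x y = \<bar>x 0 - y 0\<bar> / 2 + dX (shift x) (shift y) / 2"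
    using dX_split[OF assms, of 1] by simp
  thus ?thesis by simp
qed

lemma dX_agree:
  assumes "x \<in> Xsp" "y \<in> Xsp" "\<And>i. i < N \<Longrightarrow> x i = y i"
  shows "dX x y \<le> (1/2) ^ N"
proof -
  have "dX x y = dX ((shift ^^ N) x) ((shift ^^ N) y) / 2 ^ N"
    using dX_split[OF assms(1,2), of N] assms(3) by simp
  also have "\<dots> \<le> 1 / 2 ^ N"
    using dX_le1[OF shift_pow_Xsp[OF assms(1)] shift_pow_Xsp[OF assms(2)]]
    by (simp add: divide_right_mono)
  finally show ?thesis by (simp add: power_one_over)
qed

lemma opensX_Pow: "opensX \<subseteq> Pow Xsp"
  unfolding opensX_def by auto

lemma space_borelX: "space borelX = Xsp"
  unfolding borelX_def using opensX_Pow by (simp add: space_measure_of_conv)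

lemma opensX_in: "U \<in> opensX \<Longrightarrow> U \<in> sets borelX"
  unfolding borelX_def using opensX_Pow by (simp add: sets_measure_of_conv)

lemma lip_opensX:
  assumes "K \<ge> 0" "\<And>x y. x \<in> Xsp \<Longrightarrow> y \<in> Xsp \<Longrightarrow> \<bar>f x - f y\<bar> \<le> K * dX x y" "open S"
  shows "f -` S \<inter> Xsp \<in> opensX"
  unfolding opensX_def
proof (safe)
  fix x assume x: "x \<in> Xsp" "f x \<in> S"
  obtain e where e: "e > 0" "\<And>y. dist y (f x) < e \<Longrightarrow> y \<in> S"
    using assms(3) x(2) open_dist by metis
  show "\<exists>e>0. \<forall>y\<in>Xsp. dX x y < e \<longrightarrow> y \<in> f -` S \<inter> Xsp"
  proof (intro exI[of _ "e / (K + 1)"] conjI ballI impI)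
    show "0 < e / (K + 1)" using e assms(1) by simp
    fix y assume y: "y \<in> Xsp" "dX x y < e / (K + 1)"
    have "\<bar>f x - f y\<bar> \<le> K * dX x y" using assms(2) x y by blast
    also have "\<dots> \<le> K * (e / (K + 1))" using y assms(1) by (intro mult_left_mono) auto
    also have "\<dots> < e" using e assms(1) by (simp add: field_simps)
    finally have "dist (f y) (f x) < e" by (simp add: dist_real_def abs_minus_commute)
    thus "y \<in> f -` S \<inter> Xsp" using e y by auto
  qed
qed

lemma shift_meas: "shift \<in> borelX \<rightarrow>\<^sub>M borelX"
proof -
  have "shift \<in> borelX \<rightarrow>\<^sub>M measure_of Xsp opensX (\<lambda>_. 0)"
  proof (rule measurable_measure_of[OF opensX_Pow])
    show "shift \<in> space borelX \<rightarrow> Xsp" by (auto simp: space_borelX Xsp_iff shift_def)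
    fix A assume A: "A \<in> opensX"
    have "shift -` A \<inter> Xsp \<in> opensX"
      unfolding opensX_def
    proof (safe)
      fix x assume x: "x \<in> Xsp" "shift x \<in> A"
      obtain e where e: "e > 0" "\<forall>y\<in>Xsp. dX (shift x) y < e \<longrightarrow> y \<in> A"
        using A x unfolding opensX_def by blast
      show "\<exists>e>0. \<forall>y\<in>Xsp. dX x y < e \<longrightarrow> y \<in> shift -` A \<inter> Xsp"
      proof (intro exI[of _ "e / 2"] conjI ballI impI)
        show "0 < e / 2" using e by simp
        fix y assume y: "y \<in> Xsp" "dX x y < e / 2"
        have sy: "shift y \<in> Xsp" using y shift_pow_Xsp[of y 1] by simp
        have "dX (shift x) (shift y) \<le> 2 * dX x y" by (rule dX_shift_le[OF x(1) y(1)])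
        hence "shift y \<in> A" using e sy y by auto
        thus "y \<in> shift -` A \<inter> Xsp" using y by auto
      qed
    qed
    thus "shift -` A \<inter> space borelX \<in> sets borelX" by (simp add: space_borelX opensX_in)
  qed
  thus ?thesis by (simp add: borelX_def)
qed

lemma phi_meas:
  assumes "h \<in> classH"
  shows "(\<lambda>x. h (x 0) (x 1)) \<in> borel_measurable borelX"
proof (rule borel_measurableI)
  obtain L where L: "L \<ge> 0" "\<And>x y x' y'. x \<in> {0..1} \<Longrightarrow> y \<in> {0..1} \<Longrightarrow> x' \<in> {0..1} \<Longrightarrow> y' \<in> {0..1} \<Longrightarrow>
      \<bar>h x y - h x' y'\<bar> \<le> L * (\<bar>x - x'\<bar> + \<bar>y - y'\<bar>)" using classH_lip[OF assms] by blast
  fix S :: "real set" assume S: "open S"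
  have "(\<lambda>x. h (x 0) (x 1)) -` S \<inter> Xsp \<in> opensX"
  proof (rule lip_opensX[where K="6 * L"])
    show "0 \<le> 6 * L" using L by simp
    fix x y assume xy: "x \<in> Xsp" "y \<in> Xsp"
    have "\<bar>h (x 0) (x 1) - h (y 0) (y 1)\<bar> \<le> L * (\<bar>x 0 - y 0\<bar> + \<bar>x 1 - y 1\<bar>)"
      using L(2) xy by (simp add: Xsp_iff)
    also have "\<dots> \<le> L * (2 * dX x y + 4 * dX x y)"
      using dX_coord[OF xy, of 0] dX_coord[OF xy, of 1] L(1) by (intro mult_left_mono) auto
    finally show "\<bar>h (x 0) (x 1) - h (y 0) (y 1)\<bar> \<le> 6 * L * dX x y" by simp
  qed (rule S)
  thus "(\<lambda>x. h (x 0) (x 1)) -` S \<inter> space borelX \<in> sets borelX" by (simp add: space_borelX opensX_in)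
qed

lemma h_bound:
  assumes "h \<in> classH"
  obtains B where "\<And>x y. x \<in> {0..1} \<Longrightarrow> y \<in> {0..1} \<Longrightarrow> \<bar>h x y\<bar> \<le> B"
proof -
  obtain L where L: "L \<ge> 0" "\<And>x y x' y'. x \<in> {0..1} \<Longrightarrow> y \<in> {0..1} \<Longrightarrow> x' \<in> {0..1} \<Longrightarrow> y' \<in> {0..1} \<Longrightarrow>
      \<bar>h x y - h x' y'\<bar> \<le> L * (\<bar>x - x'\<bar> + \<bar>y - y'\<bar>)" using classH_lip[OF assms] by blast
  have "\<bar>h x y\<bar> \<le> \<bar>h 0 0\<bar> + 2 * L" if "x \<in> {0..1}" "y \<in> {0..1}" for x y
  proof -
    have "\<bar>h x y - h 0 0\<bar> \<le> L * (\<bar>x - 0\<bar> + \<bar>y - 0\<bar>)" using L(2)[of x y 0 0] that by simp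
    also have "\<dots> \<le> L * 2" using that L(1) by (intro mult_left_mono) auto
    finally show ?thesis by linarith
  qed
  thus ?thesis using that by blast
qed

lemma inv_integral_ge:
  assumes h: "h \<in> classH" and M: "M \<in> inv_measures"
  shows "hstar h \<le> integral\<^sup>L M (\<lambda>x. h (x 0) (x 1))"
proof -
  define \<phi> where "\<phi> = (\<lambda>x::nat\<Rightarrow>real. h (x 0) (x 1))"
  have sM: "sets M = sets borelX" and ps: "prob_space M" and shM: "shift \<in> M \<rightarrow>\<^sub>M M"
    and em: "\<And>A. A \<in> sets M \<Longrightarrow> emeasure M (shift -` A \<inter> space M) = emeasure M A"
    using M unfolding inv_measures_def by auto
  have spM: "space M = Xsp" using sets_eq_imp_space_eq[OF sM] space_borelX by simp
  have phiM: "\<phi> \<in> borel_measurable M"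
  proof -
    have "(borel_measurable M :: ((nat\<Rightarrow>real) \<Rightarrow> real) set) = borel_measurable borelX" by (rule measurable_cong_sets[OF sM refl])
    thus ?thesis using phi_meas[OF h] unfolding \<phi>_def by simp
  qed
  have distr: "distr M M shift = M"
  proof (rule measure_eqI)
    show "sets (distr M M shift) = sets M" by simp
    fix A assume "A \<in> sets (distr M M shift)"
    hence A: "A \<in> sets M" by simp
    show "emeasure (distr M M shift) A = emeasure M A"
      using emeasure_distr[OF shM A] em[OF A] by simp
  qed
  have powM: "(shift ^^ i) \<in> M \<rightarrow>\<^sub>M M" for i
  proof (induction i)
    case 0 thus ?case by simp
  next
    case (Suc i)
    have "(shift ^^ i) \<circ> shift \<in> M \<rightarrow>\<^sub>M M" by (rule measurable_comp[OF shM Suc.IH])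
    thus ?case by (simp only: funpow_Suc_right)
  qed
  have measi: "(\<lambda>x. \<phi> ((shift ^^ i) x)) \<in> borel_measurable M" for i
    using measurable_compose[OF powM phiM] .
  have inti: "integral\<^sup>L M (\<lambda>x. \<phi> ((shift ^^ i) x)) = integral\<^sup>L M \<phi>" for i
  proof (induction i)
    case 0 thus ?case by simp
  next
    case (Suc i)
    have "integral\<^sup>L M (\<lambda>x. \<phi> ((shift ^^ Suc i) x)) = integral\<^sup>L M (\<lambda>x. \<phi> ((shift ^^ i) (shift x)))"
      by (simp only: funpow_Suc_right comp_def)
    also have "\<dots> = integral\<^sup>L (distr M M shift) (\<lambda>x. \<phi> ((shift ^^ i) x))"
      using integral_distr[OF shM measi[of i]] by simp
    also have "\<dots> = integral\<^sup>L M (\<lambda>x. \<phi> ((shift ^^ i) x))" using distr by simp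
    finally show ?case using Suc by simp
  qed
  obtain B where B: "\<And>x y. x \<in> {0..1} \<Longrightarrow> y \<in> {0..1} \<Longrightarrow> \<bar>h x y\<bar> \<le> B" using h_bound[OF h] by blast
  have integ: "integrable M (\<lambda>x. \<phi> ((shift ^^ i) x))" for i
  proof (rule finite_measure.integrable_const_bound[where B=B])
    show "finite_measure M" using ps by (simp add: prob_space_def)
    show "AE x in M. norm (\<phi> ((shift ^^ i) x)) \<le> B"
      by (rule AE_I2) (use B in \<open>auto simp: spM \<phi>_def shift_pow Xsp_iff\<close>)
  qed (rule measi)
  obtain L where L: "L \<ge> 0" "\<And>x y x' y'. x \<in> {0..1} \<Longrightarrow> y \<in> {0..1} \<Longrightarrow> x' \<in> {0..1} \<Longrightarrow> y' \<in> {0..1} \<Longrightarrow>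
      \<bar>h x y - h x' y'\<bar> \<le> L * (\<bar>x - x'\<bar> + \<bar>y - y'\<bar>)" using classH_lip[OF h] by blast
  have main: "real n * hstar h - L \<le> real n * integral\<^sup>L M \<phi>" for n
  proof -
    have "real n * integral\<^sup>L M \<phi> = (\<Sum>i<n. integral\<^sup>L M (\<lambda>x. \<phi> ((shift ^^ i) x)))"
      using inti by simp
    also have "\<dots> = integral\<^sup>L M (\<lambda>x. \<Sum>i<n. \<phi> ((shift ^^ i) x))"
      using Bochner_Integration.integral_sum[where I="{..<n}" and f="\<lambda>i x. \<phi> ((shift ^^ i) x)"] integ by simp
    finally have eq: "real n * integral\<^sup>L M \<phi> = integral\<^sup>L M (\<lambda>x. \<Sum>i<n. \<phi> ((shift ^^ i) x))" .
    have "real n * hstar h - L \<le> integral\<^sup>L M (\<lambda>x. \<Sum>i<n. \<phi> ((shift ^^ i) x))"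
    proof (rule prob_space.integral_ge_const[OF ps])
      show "integrable M (\<lambda>x. \<Sum>i<n. \<phi> ((shift ^^ i) x))" using integ by auto
      show "AE x in M. real n * hstar h - L \<le> (\<Sum>i<n. \<phi> ((shift ^^ i) x))"
      proof (rule AE_I2)
        fix x assume "x \<in> space M"
        hence x: "\<And>i. x i \<in> {0..1}" by (simp add: spM Xsp_iff)
        have "real n * hstar h - L * \<bar>x n - x 0\<bar> \<le> (\<Sum>i<n. h (x i) (x (Suc i)))"
          by (rule path_bound[OF h x L])
        moreover have "L * \<bar>x n - x 0\<bar> \<le> L * 1"
          using x[of n] x[of 0] L(1) by (intro mult_left_mono) auto
        moreover have "(\<Sum>i<n. \<phi> ((shift ^^ i) x)) = (\<Sum>i<n. h (x i) (x (Suc i)))"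
          by (simp add: \<phi>_def shift_pow)
        ultimately show "real n * hstar h - L \<le> (\<Sum>i<n. \<phi> ((shift ^^ i) x))" by simp
      qed
    qed
    thus ?thesis using eq by simp
  qed
  show ?thesis
  proof (rule ccontr)
    assume "\<not> hstar h \<le> integral\<^sup>L M (\<lambda>x. h (x 0) (x 1))"
    hence d: "hstar h - integral\<^sup>L M \<phi> > 0" unfolding \<phi>_def by simp
    obtain n where n: "L / (hstar h - integral\<^sup>L M \<phi>) < real n" using reals_Archimedean2 by blast
    hence "L < real n * (hstar h - integral\<^sup>L M \<phi>)" using d by (simp add: field_simps)
    thus False using main[of n] by (simp add: algebra_simps)
  qed
qed

lemma alpha_eq:
  assumes h: "h \<in> classH" and a: "a \<in> {0..1}" "h a a = hstar h"
  shows "alpha (\<lambda>x. h (x 0) (x 1)) = hstar h"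
proof -
  define D where "D = return borelX (const_seq a)"
  have ca: "const_seq a \<in> Xsp" using a by (simp add: Xsp_iff const_seq_def)
  have sD: "sets D = sets borelX" by (simp add: D_def)
  have shc: "shift (const_seq a) = const_seq a" by (simp add: shift_def const_seq_def)
  have "D \<in> inv_measures"
    unfolding inv_measures_def
  proof (intro CollectI conjI ballI)
    show "sets D = sets borelX" by (rule sD)
    show "prob_space D" unfolding D_def by (rule prob_space_return) (simp add: space_borelX ca)
    show "shift \<in> D \<rightarrow>\<^sub>M D" using shift_meas measurable_cong_sets[OF sD sD] by simp
    fix A assume A: "A \<in> sets D"
    have spD: "space D = Xsp" using sets_eq_imp_space_eq[OF sD] space_borelX by simp
    have A': "A \<in> sets borelX" using A sD by simp
    have pre: "shift -` A \<inter> space D \<in> sets borelX"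
      using measurable_sets[OF shift_meas A'] spD space_borelX by simp
    show "emeasure D (shift -` A \<inter> space D) = emeasure D A"
      unfolding D_def using emeasure_return[OF pre] emeasure_return[OF A'] ca shc spD
      by (simp add: D_def indicator_def)
  qed
  hence mem: "h a a \<in> (\<lambda>M. integral\<^sup>L M (\<lambda>x. h (x 0) (x 1))) ` inv_measures"
    using integral_return[of "const_seq a" borelX "\<lambda>x. h (x 0) (x 1)"] phi_meas[OF h] ca
    by (force simp: D_def space_borelX const_seq_def)
  have lb: "\<And>y. y \<in> (\<lambda>M. integral\<^sup>L M (\<lambda>x. h (x 0) (x 1))) ` inv_measures \<Longrightarrow> hstar h \<le> y"
    using inv_integral_ge[OF h] by blast
  have bdd: "bdd_below ((\<lambda>M. integral\<^sup>L M (\<lambda>x. h (x 0) (x 1))) ` inv_measures)"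
    using lb by (meson bdd_below.I)
  have "alpha (\<lambda>x. h (x 0) (x 1)) \<le> h a a" unfolding alpha_def by (rule cInf_lower[OF mem bdd])
  moreover have "hstar h \<le> alpha (\<lambda>x. h (x 0) (x 1))" unfolding alpha_def
    by (rule cInf_greatest) (use mem lb in auto)
  ultimately show ?thesis using a by simp
qed

definition AI :: "(real \<Rightarrow> real \<Rightarrow> real) \<Rightarrow> (nat \<Rightarrow> real) \<Rightarrow> (nat \<Rightarrow> real) \<Rightarrow> nat \<Rightarrow> real \<Rightarrow> ereal" where
  "AI h x y n \<epsilon> = Inf ((\<lambda>z. ereal (\<Sum>i<n. h (z i) (z (Suc i)) - hstar h)) ` Bset x y n \<epsilon>)"

lemma antimono_tendsto:
  fixes F :: "real \<Rightarrow> ereal"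
  assumes "\<And>x y. 0 < x \<Longrightarrow> x \<le> y \<Longrightarrow> F y \<le> F x"
  shows "(F \<longlongrightarrow> (SUP e\<in>{0<..}. F e)) (at_right 0)"
proof (rule increasing_tendsto)
  show "\<forall>\<^sub>F n in at_right 0. F n \<le> (SUP e\<in>{0<..}. F e)"
    unfolding eventually_at_right_field by (intro exI[of _ 1]) (auto intro: SUP_upper)
  fix x assume "x < (SUP e\<in>{0<..}. F e)"
  then obtain e0 where e0: "e0 > 0" "x < F e0" by (auto simp: less_SUP_iff)
  show "\<forall>\<^sub>F n in at_right 0. x < F n"
    unfolding eventually_at_right_field
  proof (intro exI[of _ e0] conjI allI impI)
    fix y :: real assume "0 < y" "y < e0"
    hence "F e0 \<le> F y" using assms by simp
    thus "x < F y" using e0(2) by simp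
  qed (use e0 in simp)
qed

lemma peierls_SUP:
  assumes "alpha (\<lambda>x. h (x 0) (x 1)) = hstar h"
  shows "peierls (\<lambda>x. h (x 0) (x 1)) x y = (SUP e\<in>{0<..}. liminf (\<lambda>n. AI h x y n e))"
proof -
  have eq: "peierls (\<lambda>x. h (x 0) (x 1)) x y = Lim (at_right 0) (\<lambda>e. liminf (\<lambda>n. AI h x y n e))"
    unfolding peierls_def AI_def assms by (simp add: shift_pow)
  have mono: "liminf (\<lambda>n. AI h x y n e2) \<le> liminf (\<lambda>n. AI h x y n e1)" if "0 < e1" "e1 \<le> e2" for e1 e2
  proof (rule Liminf_mono, rule always_eventually, rule allI)
    fix n
    have "Bset x y n e1 \<subseteq> Bset x y n e2" using that unfolding Bset_def by auto
    thus "AI h x y n e2 \<le> AI h x y n e1" unfolding AI_def by (intro Inf_superset_mono) auto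
  qed
  show ?thesis unfolding eq
    by (rule tendsto_Lim[OF _ antimono_tendsto]) (use mono in auto)
qed

lemma pad_sum:
  assumes "h (p 0) (p 0) = hstar h" "h (p k) (p k) = hstar h"
  shows "(\<Sum>i<n. h (p (min (i - N) k)) (p (min (Suc i - N) k)) - hstar h)
        = (\<Sum>j<min (n - N) k. h (p j) (p (Suc j)) - hstar h)"
proof (induction n)
  case 0 thus ?case by simp
next
  case (Suc n)
  define T where "T = (\<lambda>i. h (p (min (i - N) k)) (p (min (Suc i - N) k)) - hstar h)"
  define G where "G = (\<lambda>j. h (p j) (p (Suc j)) - hstar h)"
  have IH: "(\<Sum>i<n. T i) = (\<Sum>j<min (n - N) k. G j)" using Suc unfolding T_def G_def .
  have "(\<Sum>i<Suc n. T i) = (\<Sum>j<min (Suc n - N) k. G j)"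
  proof (cases "n < N")
    case True
    hence m: "min (n - N) k = 0" "min (Suc n - N) k = 0" by auto
    have "T n = 0" unfolding T_def m using assms by simp
    thus ?thesis using IH m by simp
  next
    case False
    show ?thesis
    proof (cases "n < N + k")
      case True
      hence m: "min (n - N) k = n - N" "min (Suc n - N) k = Suc (n - N)" using False by auto
      have "T n = G (n - N)" unfolding T_def G_def m ..
      thus ?thesis using IH m by simp
    next
      case c2: False
      hence m: "min (n - N) k = k" "min (Suc n - N) k = k" using False by auto
      have "T n = 0" unfolding T_def m using assms by simp
      thus ?thesis using IH m by simp
    qed
  qed
  thus ?case unfolding T_def G_def .
qed

lemma const_Xsp: "x \<in> {0..1} \<Longrightarrow> const_seq x \<in> Xsp"
  by (simp add: Xsp_iff const_seq_def)

lemma path_upper: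
  assumes x: "x \<in> {0..1}" "h x x = hstar h" and y: "y \<in> {0..1}" "h y y = hstar h"
    and p: "p 0 = x" "p k = y" "\<And>j. p j \<in> {0..1}" and e: "\<epsilon> > 0"
  shows "\<exists>N. \<forall>n\<ge>N. AI h (const_seq x) (const_seq y) n \<epsilon> \<le> ereal (\<Sum>j<k. h (p j) (p (Suc j)) - hstar h)"
proof -
  obtain N0 where N0: "(1/2::real) ^ N0 < \<epsilon>" using real_arch_pow_inv[OF e] by force
  define z where "z = (\<lambda>i. p (min (i - N0) k))"
  have zX: "z \<in> Xsp" using p by (simp add: z_def Xsp_iff)
  have "AI h (const_seq x) (const_seq y) n \<epsilon> \<le> ereal (\<Sum>j<k. h (p j) (p (Suc j)) - hstar h)"
    if n: "n \<ge> N0 + k" for n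
  proof -
    have "dX (const_seq x) z \<le> (1/2) ^ N0"
      by (rule dX_agree[OF const_Xsp[OF x(1)] zX]) (simp add: z_def const_seq_def p)
    hence d1: "dX (const_seq x) z < \<epsilon>" using N0 by simp
    have "(shift ^^ n) z = const_seq y"
    proof (rule ext)
      fix i
      have "min (i + n - N0) k = k" using n by simp
      thus "(shift ^^ n) z i = const_seq y i" by (simp add: shift_pow z_def const_seq_def p)
    qed
    hence d2: "dX ((shift ^^ n) z) (const_seq y) < \<epsilon>" using e by (simp add: dX_self)
    have zB: "z \<in> Bset (const_seq x) (const_seq y) n \<epsilon>" using zX d1 d2 by (simp add: Bset_def)
    have "(\<Sum>i<n. h (z i) (z (Suc i)) - hstar h) = (\<Sum>j<min (n - N0) k. h (p j) (p (Suc j)) - hstar h)"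
      unfolding z_def by (rule pad_sum) (simp_all add: p x y)
    also have "min (n - N0) k = k" using n by simp
    finally have "(\<Sum>i<n. h (z i) (z (Suc i)) - hstar h) = (\<Sum>j<k. h (p j) (p (Suc j)) - hstar h)" .
    hence "ereal (\<Sum>j<k. h (p j) (p (Suc j)) - hstar h) \<in> (\<lambda>z. ereal (\<Sum>i<n. h (z i) (z (Suc i)) - hstar h)) ` Bset (const_seq x) (const_seq y) n \<epsilon>"
      using zB by (intro image_eqI[where x=z]) simp_all
    thus ?thesis unfolding AI_def by (rule Inf_lower)
  qed
  thus ?thesis by blast
qed

lemma liminf_upper_ev:
  assumes "\<exists>N. \<forall>n\<ge>N. f n \<le> (c::ereal)"
  shows "liminf f \<le> c"
proof -
  have "limsup f \<le> c" by (rule Limsup_bounded) (use assms in \<open>auto simp: eventually_sequentially\<close>)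
  thus ?thesis using Liminf_le_Limsup[of sequentially f] by simp
qed

lemma peierls_upper:
  assumes al: "alpha (\<lambda>x. h (x 0) (x 1)) = hstar h"
    and x: "x \<in> {0..1}" "h x x = hstar h" and y: "y \<in> {0..1}" "h y y = hstar h"
    and p: "p 0 = x" "p k = y" "\<And>j. p j \<in> {0..1}"
  shows "peierls (\<lambda>x. h (x 0) (x 1)) (const_seq x) (const_seq y) \<le> ereal (\<Sum>j<k. h (p j) (p (Suc j)) - hstar h)"
  unfolding peierls_SUP[OF al]
  by (rule SUP_least, rule liminf_upper_ev, rule path_upper[OF x y p]) auto

lemma bset_close:
  assumes "x \<in> {0..1}" "y \<in> {0..1}" "z \<in> Bset (const_seq x) (const_seq y) n \<epsilon>"
  shows "\<bar>z 0 - x\<bar> < 2 * \<epsilon>" "\<bar>z n - y\<bar> < 2 * \<epsilon>" "\<And>i. z i \<in> {0..1}"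
proof -
  have z: "z \<in> Xsp" "dX (const_seq x) z < \<epsilon>" "dX ((shift ^^ n) z) (const_seq y) < \<epsilon>"
    using assms(3) by (auto simp: Bset_def)
  have "\<bar>const_seq x 0 - z 0\<bar> \<le> 2 ^ (0 + 1) * dX (const_seq x) z"
    by (rule dX_coord[OF const_Xsp[OF assms(1)] z(1)])
  thus "\<bar>z 0 - x\<bar> < 2 * \<epsilon>" using z by (simp add: const_seq_def abs_minus_commute)
  have "\<bar>(shift ^^ n) z 0 - const_seq y 0\<bar> \<le> 2 ^ (0 + 1) * dX ((shift ^^ n) z) (const_seq y)"
    by (rule dX_coord[OF shift_pow_Xsp[OF z(1)] const_Xsp[OF assms(2)]])
  thus "\<bar>z n - y\<bar> < 2 * \<epsilon>" using z by (simp add: const_seq_def shift_pow)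
  show "\<And>i. z i \<in> {0..1}" using z(1) by (simp add: Xsp_iff)
qed

lemma sum_split_add: "(\<Sum>i<n + m. g i) = (\<Sum>i<n. g i) + (\<Sum>i<m. g (n + i)) " for g :: "nat \<Rightarrow> real"
  by (induction m) (auto simp: add_Suc_right)

lemma concat_bound:
  assumes h: "h \<in> classH" and L: "L \<ge> 0" "\<And>x y x' y'. x \<in> {0..1} \<Longrightarrow> y \<in> {0..1} \<Longrightarrow> x' \<in> {0..1} \<Longrightarrow> y' \<in> {0..1} \<Longrightarrow>
      \<bar>h x y - h x' y'\<bar> \<le> L * (\<bar>x - x'\<bar> + \<bar>y - y'\<bar>)"
    and z: "\<And>i. z i \<in> {0..1}" and w: "\<And>i. w i \<in> {0..1}" and n: "n \<ge> 1"
  shows "- L * \<bar>w m - z 0\<bar> - L * \<bar>w 0 - z n\<bar> \<le>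
    (\<Sum>i<n. h (z i) (z (Suc i)) - hstar h) + (\<Sum>i<m. h (w i) (w (Suc i)) - hstar h)"
proof -
  define F where "F = (\<lambda>i. if i < n then z i else w (i - n))"
  have F01: "\<And>i. F i \<in> {0..1}" using z w by (simp add: F_def)
  have pb: "real (n + m) * hstar h - L * \<bar>F (n + m) - F 0\<bar> \<le> (\<Sum>i<n + m. h (F i) (F (Suc i)))"
    by (rule path_bound[OF h F01 L])
  have F0: "F 0 = z 0" "F (n + m) = w m" using n by (auto simp: F_def)
  have s2: "(\<Sum>i<m. h (F (n + i)) (F (Suc (n + i)))) = (\<Sum>i<m. h (w i) (w (Suc i)))"
    by (simp add: F_def)
  obtain n' where n': "n = Suc n'" using n by (cases n) auto
  have s1: "(\<Sum>i<n. h (F i) (F (Suc i))) \<le> (\<Sum>i<n. h (z i) (z (Suc i))) + L * \<bar>w 0 - z n\<bar>"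
  proof -
    have a: "(\<Sum>i<n'. h (F i) (F (Suc i))) = (\<Sum>i<n'. h (z i) (z (Suc i)))"
      by (rule sum.cong) (auto simp: F_def n')
    have "\<bar>h (z n') (w 0) - h (z n') (z n)\<bar> \<le> L * (\<bar>z n' - z n'\<bar> + \<bar>w 0 - z n\<bar>)"
      using L(2) z w by blast
    hence b: "h (F n') (F n) \<le> h (z n') (z n) + L * \<bar>w 0 - z n\<bar>" by (simp add: F_def n')
    show ?thesis using a b n' by simp
  qed
  have "(\<Sum>i<n + m. h (F i) (F (Suc i))) = (\<Sum>i<n. h (F i) (F (Suc i))) + (\<Sum>i<m. h (F (n + i)) (F (Suc (n + i))))"
    using sum_split_add[of "\<lambda>i. h (F i) (F (Suc i))" n m] by simp
  hence "real (n + m) * hstar h - L * \<bar>w m - z 0\<bar> \<le> (\<Sum>i<n. h (z i) (z (Suc i))) + L * \<bar>w 0 - z n\<bar> + (\<Sum>i<m. h (w i) (w (Suc i)))"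
    using pb s1 s2 F0 by simp
  thus ?thesis by (simp add: sum_subtractf algebra_simps)
qed

lemma AI_lower:
  assumes h: "h \<in> classH" and L: "L \<ge> 0" "\<And>x y x' y'. x \<in> {0..1} \<Longrightarrow> y \<in> {0..1} \<Longrightarrow> x' \<in> {0..1} \<Longrightarrow> y' \<in> {0..1} \<Longrightarrow>
      \<bar>h x y - h x' y'\<bar> \<le> L * (\<bar>x - x'\<bar> + \<bar>y - y'\<bar>)"
    and x: "x \<in> {0..1}" and y: "y \<in> {0..1}" and e: "e > 0" and n: "n \<ge> 1"
    and c2: "\<exists>N. \<forall>m\<ge>N. AI h (const_seq y) (const_seq x) m e \<le> ereal c2"
  shows "ereal (- 8 * L * e - c2) \<le> AI h (const_seq x) (const_seq y) n e"
  unfolding AI_def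
proof (rule Inf_greatest)
  fix t assume "t \<in> (\<lambda>z. ereal (\<Sum>i<n. h (z i) (z (Suc i)) - hstar h)) ` Bset (const_seq x) (const_seq y) n e"
  then obtain z where zB: "z \<in> Bset (const_seq x) (const_seq y) n e"
    and t: "t = ereal (\<Sum>i<n. h (z i) (z (Suc i)) - hstar h)" by blast
  define Sz where "Sz = (\<Sum>i<n. h (z i) (z (Suc i)) - hstar h)"
  show "ereal (- 8 * L * e - c2) \<le> t"
  proof (rule ccontr)
    assume "\<not> ereal (- 8 * L * e - c2) \<le> t"
    hence lt: "Sz < - 8 * L * e - c2" unfolding t Sz_def by simp
    obtain N where N: "\<forall>m\<ge>N. AI h (const_seq y) (const_seq x) m e \<le> ereal c2" using c2 by blast
    define m where "m = max N 1"
    have "AI h (const_seq y) (const_seq x) m e \<le> ereal c2" using N by (simp add: m_def)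
    also have "\<dots> < ereal (- 8 * L * e - Sz)" using lt by simp
    finally have "AI h (const_seq y) (const_seq x) m e < ereal (- 8 * L * e - Sz)" .
    then obtain w where wB: "w \<in> Bset (const_seq y) (const_seq x) m e"
      and wlt: "ereal (\<Sum>i<m. h (w i) (w (Suc i)) - hstar h) < ereal (- 8 * L * e - Sz)"
      unfolding AI_def by (auto simp: INF_less_iff)
    have zc: "\<bar>z 0 - x\<bar> < 2 * e" "\<bar>z n - y\<bar> < 2 * e" "\<And>i. z i \<in> {0..1}"
      using bset_close[OF x y zB] by auto
    have wc: "\<bar>w 0 - y\<bar> < 2 * e" "\<bar>w m - x\<bar> < 2 * e" "\<And>i. w i \<in> {0..1}"
      using bset_close[OF y x wB] by auto
    have cb: "- L * \<bar>w m - z 0\<bar> - L * \<bar>w 0 - z n\<bar> \<le> Sz + (\<Sum>i<m. h (w i) (w (Suc i)) - hstar h)"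
      unfolding Sz_def by (rule concat_bound[OF h L zc(3) wc(3) n])
    have "L * \<bar>w m - z 0\<bar> \<le> L * (4 * e)" using zc wc L(1) by (intro mult_left_mono) auto
    moreover have "L * \<bar>w 0 - z n\<bar> \<le> L * (4 * e)" using zc wc L(1) by (intro mult_left_mono) auto
    ultimately show False using cb wlt by simp
  qed
qed

lemma peierls_lower:
  assumes h: "h \<in> classH" and al: "alpha (\<lambda>x. h (x 0) (x 1)) = hstar h"
    and x: "x \<in> {0..1}" and y: "y \<in> {0..1}"
    and c2: "\<And>e. e > 0 \<Longrightarrow> \<exists>N. \<forall>m\<ge>N. AI h (const_seq y) (const_seq x) m e \<le> ereal c2"
  shows "ereal (- c2) \<le> peierls (\<lambda>x. h (x 0) (x 1)) (const_seq x) (const_seq y)"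
proof -
  obtain L where L: "L \<ge> 0" "\<And>x y x' y'. x \<in> {0..1} \<Longrightarrow> y \<in> {0..1} \<Longrightarrow> x' \<in> {0..1} \<Longrightarrow> y' \<in> {0..1} \<Longrightarrow>
      \<bar>h x y - h x' y'\<bar> \<le> L * (\<bar>x - x'\<bar> + \<bar>y - y'\<bar>)" using classH_lip[OF h] by blast
  define P where "P = (SUP e\<in>{0<..}. liminf (\<lambda>n. AI h (const_seq x) (const_seq y) n e))"
  have le: "ereal (- 8 * L * e - c2) \<le> P" if e: "e > 0" for e
  proof -
    have "ereal (- 8 * L * e - c2) \<le> liminf (\<lambda>n. AI h (const_seq x) (const_seq y) n e)"
      by (rule Liminf_bounded) (use AI_lower[OF h L x y e _ c2[OF e]] in \<open>auto simp: eventually_sequentially\<close>)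
    also have "\<dots> \<le> P" unfolding P_def using e by (intro SUP_upper) auto
    finally show ?thesis .
  qed
  have lim: "((\<lambda>e. ereal (- 8 * L * e - c2)) \<longlongrightarrow> ereal (- 8 * L * 0 - c2)) (at_right 0)"
    unfolding lim_ereal by (intro tendsto_intros)
  have "ereal (- 8 * L * 0 - c2) \<le> P"
  proof (rule tendsto_le[OF trivial_limit_at_right_real tendsto_const lim])
    show "\<forall>\<^sub>F e in at_right 0. ereal (- 8 * L * e - c2) \<le> P"
      unfolding eventually_at_right_field
    proof (intro exI[of _ "1::real"] conjI allI impI)
      fix e :: real assume e: "0 < e" "e < 1"
      show "ereal (- 8 * L * e - c2) \<le> P" by (rule le[OF e(1)])
    qed simp
  qed
  thus ?thesis unfolding peierls_SUP[OF al] P_def by simp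
qed

lemma chain_exists:
  fixes h :: "real \<Rightarrow> real \<Rightarrow> real" and c :: real
  assumes ab: "a \<le> b" and sub: "{a..b} \<subseteq> {0..1}" and hc: "\<And>s. s \<in> {a..b} \<Longrightarrow> h s s = c"
    and L: "L \<ge> 0" "\<And>x y x' y'. x \<in> {0..1} \<Longrightarrow> y \<in> {0..1} \<Longrightarrow> x' \<in> {0..1} \<Longrightarrow> y' \<in> {0..1} \<Longrightarrow>
      \<bar>h x y - h x' y'\<bar> \<le> L * (\<bar>x - x'\<bar> + \<bar>y - y'\<bar>)"
    and lim: "\<And>s. s \<in> {a..b} \<Longrightarrow> ((\<lambda>\<delta>. (h (s + \<delta>) s - h s s) / \<delta> + (h s (s + \<delta>) - h s s) / \<delta>) \<longlongrightarrow> 0) (at_right 0)"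
    and eps: "\<epsilon> > 0" and gam: "\<gamma> > 0"
  shows "\<exists>p k. p 0 = a \<and> p k = b \<and> (\<forall>j. p j \<in> {a..b}) \<and>
     (\<Sum>j<k. h (p j) (p (Suc j)) + h (p (Suc j)) (p j) - 2 * c) \<le> \<epsilon> * (b - a) + \<gamma>"
proof -
  define T where "T = (\<lambda>u v. h u v + h v u - 2 * c)"
  define cost where "cost = (\<lambda>p k. \<Sum>j<k. T (p j) (p (Suc j)))"
  define Good where "Good = (\<lambda>t. t \<in> {a..b} \<and> (\<forall>g>0. \<exists>p k. p 0 = a \<and> p k = t \<and> (\<forall>j. p j \<in> {a..b}) \<and>
        cost p k \<le> \<epsilon> * (t - a) + g))"
  have ext: "\<exists>p' k'. p' 0 = a \<and> p' k' = s \<and> (\<forall>j. p' j \<in> {a..b}) \<and> cost p' k' = cost p k + T t s"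
    if "p 0 = a" "p k = t" "\<forall>j. p j \<in> {a..b}" "s \<in> {a..b}" for p k t s
  proof (intro exI conjI)
    let ?p = "p(Suc k := s)"
    show "?p 0 = a" using that by simp
    show "?p (Suc k) = s" by simp
    show "\<forall>j. ?p j \<in> {a..b}" using that by simp
    have "cost ?p (Suc k) = (\<Sum>j<k. T (?p j) (?p (Suc j))) + T (?p k) (?p (Suc k))"
      unfolding cost_def by simp
    also have "(\<Sum>j<k. T (?p j) (?p (Suc j))) = cost p k"
      unfolding cost_def by (rule sum.cong) auto
    finally show "cost ?p (Suc k) = cost p k + T t s" using that by (simp add: fun_upd_def)
  qed
  have Tb: "T t s \<le> 2 * L * \<bar>s - t\<bar>" if "t \<in> {a..b}" "s \<in> {a..b}" for t s
  proof -
    have 01: "t \<in> {0..1}" "s \<in> {0..1}" using that sub by auto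
    have "\<bar>h t s - h s s\<bar> \<le> L * (\<bar>t - s\<bar> + \<bar>s - s\<bar>)" using L(2) 01 by blast
    moreover have "\<bar>h s t - h s s\<bar> \<le> L * (\<bar>s - s\<bar> + \<bar>t - s\<bar>)" using L(2) 01 by blast
    moreover have "T t s = (h t s - h s s) + (h s t - h s s)" unfolding T_def using hc[OF that(2)] by simp
    ultimately show ?thesis by (simp add: abs_minus_commute algebra_simps)
  qed
  define S where "S = {t. Good t}"
  have aS: "a \<in> S"
    unfolding S_def Good_def
  proof (intro CollectI conjI allI impI)
    show "a \<in> {a..b}" using ab by simp
    fix g :: real assume "g > 0"
    thus "\<exists>p k. p 0 = a \<and> p k = a \<and> (\<forall>j. p j \<in> {a..b}) \<and> cost p k \<le> \<epsilon> * (a - a) + g"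
      using ab by (intro exI[of _ "\<lambda>_. a"] exI[of _ 0]) (simp add: cost_def)
  qed
  have Sb: "\<And>t. t \<in> S \<Longrightarrow> t \<le> b" "\<And>t. t \<in> S \<Longrightarrow> a \<le> t" unfolding S_def Good_def by auto
  have bdd: "bdd_above S" using Sb by (meson bdd_above.I)
  have Sne: "S \<noteq> {}" using aS by blast
  define s where "s = Sup S"
  have as: "a \<le> s" unfolding s_def by (rule cSup_upper[OF aS bdd])
  have sb: "s \<le> b" unfolding s_def by (rule cSup_least[OF Sne]) (use Sb in auto)
  have sab: "s \<in> {a..b}" using as sb by simp
  have Gs: "Good s"
    unfolding Good_def
  proof (intro conjI allI impI)
    show "s \<in> {a..b}" by (rule sab)
    fix g :: real assume g: "g > 0"
    define d where "d = g / (4 * L + 1)"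
    have d: "d > 0" using g L(1) by (simp add: d_def)
    have "s - d < Sup S" using d s_def by simp
    then obtain t where tS: "t \<in> S" and td: "s - d < t" using less_cSup_iff[OF Sne bdd] by blast
    have ts: "t \<le> s" unfolding s_def by (rule cSup_upper[OF tS bdd])
    have Gt: "Good t" using tS S_def by simp
    have tab: "t \<in> {a..b}" using Gt Good_def by simp
    obtain p k where p: "p 0 = a" "p k = t" "\<forall>j. p j \<in> {a..b}" "cost p k \<le> \<epsilon> * (t - a) + g / 2"
      using Gt g unfolding Good_def by (meson half_gt_zero)
    obtain p' k' where p': "p' 0 = a" "p' k' = s" "\<forall>j. p' j \<in> {a..b}" "cost p' k' = cost p k + T t s"
      using ext[OF p(1-3) sab] by blast
    have "T t s \<le> 2 * L * \<bar>s - t\<bar>" by (rule Tb[OF tab sab])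
    also have "\<dots> \<le> 2 * L * d" using ts td L(1) by (intro mult_left_mono) auto
    also have "\<dots> \<le> g / 2"
    proof -
      have "2 * L * d = g * (2 * L) / (4 * L + 1)" by (simp add: d_def)
      also have "\<dots> \<le> g / 2" using g L(1) by (simp add: field_simps)
      finally show ?thesis .
    qed
    finally have "cost p' k' \<le> \<epsilon> * (t - a) + g" using p'(4) p(4) by simp
    also have "\<dots> \<le> \<epsilon> * (s - a) + g" using ts eps by (simp add: mult_left_mono)
    finally show "\<exists>p k. p 0 = a \<and> p k = s \<and> (\<forall>j. p j \<in> {a..b}) \<and> cost p k \<le> \<epsilon> * (s - a) + g"
      using p' by blast
  qed
  have "s = b"
  proof (rule ccontr)
    assume "s \<noteq> b"
    hence slb: "s < b" using sb by simp
    have "\<forall>\<^sub>F \<delta> in at_right 0. dist ((h (s + \<delta>) s - h s s) / \<delta> + (h s (s + \<delta>) - h s s) / \<delta>) 0 < \<epsilon>"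
      using lim[OF sab] eps by (simp add: tendsto_iff)
    then obtain d where d: "d > 0"
      and dd: "\<And>\<delta>. 0 < \<delta> \<Longrightarrow> \<delta> < d \<Longrightarrow> \<bar>(h (s + \<delta>) s - h s s) / \<delta> + (h s (s + \<delta>) - h s s) / \<delta>\<bar> < \<epsilon>"
      unfolding eventually_at_right_field by (auto simp: dist_real_def)
    define t where "t = min b (s + d / 2)"
    have st: "s < t" "t - s < d" using slb d by (auto simp: t_def)
    have tab: "t \<in> {a..b}" using st as by (auto simp: t_def)
    have "Good t"
      unfolding Good_def
    proof (intro conjI allI impI)
      show "t \<in> {a..b}" by (rule tab)
      fix g :: real assume g: "g > 0"
      obtain p k where p: "p 0 = a" "p k = s" "\<forall>j. p j \<in> {a..b}" "cost p k \<le> \<epsilon> * (s - a) + g"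
        using Gs g unfolding Good_def by blast
      obtain p' k' where p': "p' 0 = a" "p' k' = t" "\<forall>j. p' j \<in> {a..b}" "cost p' k' = cost p k + T s t"
        using ext[OF p(1-3) tab] by blast
      define \<delta> where "\<delta> = t - s"
      have \<delta>: "0 < \<delta>" "\<delta> < d" "t = s + \<delta>" using st by (auto simp: \<delta>_def)
      have "T s t = \<delta> * ((h (s + \<delta>) s - h s s) / \<delta> + (h s (s + \<delta>) - h s s) / \<delta>)"
        unfolding T_def using \<delta> hc[OF sab] by (simp add: field_simps)
      also have "\<dots> \<le> \<delta> * \<epsilon>" using dd[OF \<delta>(1,2)] \<delta>(1) by (intro mult_left_mono) auto
      finally have "cost p' k' \<le> \<epsilon> * (s - a) + g + \<delta> * \<epsilon>" using p'(4) p(4) by simp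
      also have "\<dots> = \<epsilon> * (t - a) + g" by (simp add: \<delta>_def algebra_simps)
      finally show "\<exists>p k. p 0 = a \<and> p k = t \<and> (\<forall>j. p j \<in> {a..b}) \<and> cost p k \<le> \<epsilon> * (t - a) + g"
        using p' by blast
    qed
    hence "t \<le> s" unfolding s_def by (intro cSup_upper[OF _ bdd]) (simp add: S_def)
    thus False using st by simp
  qed
  with Gs obtain p k where "p 0 = a" "p k = b" "\<forall>j. p j \<in> {a..b}" "cost p k \<le> \<epsilon> * (b - a) + \<gamma>"
    unfolding Good_def using gam by blast
  thus ?thesis unfolding cost_def T_def by blast
qed

lemma core:
  assumes h: "h \<in> classH" and ab: "a \<le> b" and sub: "{a..b} \<subseteq> mset_h h"
    and lim: "\<forall>z \<in> {a..b}. ((\<lambda>\<delta>. (h (z + \<delta>) z - h z z) / \<delta> + (h z (z + \<delta>) - h z z) / \<delta>) \<longlongrightarrow> 0) (at_right 0)"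
  shows "peierls (\<lambda>x. h (x 0) (x 1)) (const_seq a) (const_seq b)
       + peierls (\<lambda>x. h (x 0) (x 1)) (const_seq b) (const_seq a) = 0"
proof -
  define \<phi> where "\<phi> = (\<lambda>x::nat\<Rightarrow>real. h (x 0) (x 1))"
  define P1 where "P1 = peierls \<phi> (const_seq a) (const_seq b)"
  define P2 where "P2 = peierls \<phi> (const_seq b) (const_seq a)"
  have sub01: "{a..b} \<subseteq> {0..1}" using sub by (auto simp: mset_h_def)
  have hc: "\<And>s. s \<in> {a..b} \<Longrightarrow> h s s = hstar h" using sub by (auto simp: mset_h_def)
  have a01: "a \<in> {0..1}" and b01: "b \<in> {0..1}" using sub01 ab by auto
  have haa: "h a a = hstar h" and hbb: "h b b = hstar h" using hc ab by auto
  have al: "alpha \<phi> = hstar h" unfolding \<phi>_def by (rule alpha_eq[OF h a01 haa])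
  obtain L where L: "L \<ge> 0" "\<And>x y x' y'. x \<in> {0..1} \<Longrightarrow> y \<in> {0..1} \<Longrightarrow> x' \<in> {0..1} \<Longrightarrow> y' \<in> {0..1} \<Longrightarrow>
      \<bar>h x y - h x' y'\<bar> \<le> L * (\<bar>x - x'\<bar> + \<bar>y - y'\<bar>)" using classH_lip[OF h] by blast
  have key: "\<exists>c1 c2. c1 + c2 \<le> \<eta> \<and> P1 \<le> ereal c1 \<and> P2 \<le> ereal c2 \<and> ereal (- c2) \<le> P1 \<and> ereal (- c1) \<le> P2"
    if eta: "\<eta> > 0" for \<eta>
  proof -
    define \<epsilon> where "\<epsilon> = \<eta> / (2 * (b - a + 1))"
    have eps: "\<epsilon> > 0" using eta ab by (simp add: \<epsilon>_def)
    have "\<epsilon> * (b - a) \<le> \<eta> / 2"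
    proof -
      have "\<epsilon> * (b - a) = (\<eta> / 2) * ((b - a) / (b - a + 1))" by (simp add: \<epsilon>_def field_simps)
      also have "\<dots> \<le> (\<eta> / 2) * 1" using eta ab by (intro mult_left_mono) auto
      finally show ?thesis by simp
    qed
    moreover obtain p k where p: "p 0 = a" "p k = b" "\<forall>j. p j \<in> {a..b}"
      and cost: "(\<Sum>j<k. h (p j) (p (Suc j)) + h (p (Suc j)) (p j) - 2 * hstar h) \<le> \<epsilon> * (b - a) + \<eta> / 2"
      using chain_exists[OF ab sub01 hc L lim[rule_format] eps, of "\<eta> / 2"] eta by auto
    define q where "q = (\<lambda>j. p (k - j))"
    have p01: "\<And>j. p j \<in> {0..1}" by (metis p(3) sub01 subsetD)
    have q: "q 0 = b" "q k = a" "\<And>j. q j \<in> {0..1}" using p p01 by (auto simp: q_def)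
    define c1 where "c1 = (\<Sum>j<k. h (p j) (p (Suc j)) - hstar h)"
    define c2 where "c2 = (\<Sum>j<k. h (q j) (q (Suc j)) - hstar h)"
    have c2': "c2 = (\<Sum>j<k. h (p (Suc j)) (p j) - hstar h)"
    proof -
      have "c2 = (\<Sum>i<k. (\<lambda>j. h (p (Suc j)) (p j) - hstar h) (k - Suc i))"
        unfolding c2_def q_def by (rule sum.cong) (auto simp: Suc_diff_Suc)
      also have "\<dots> = (\<Sum>j<k. h (p (Suc j)) (p j) - hstar h)" by (rule sum.nat_diff_reindex)
      finally show ?thesis .
    qed
    have "c1 + c2 = (\<Sum>j<k. h (p j) (p (Suc j)) + h (p (Suc j)) (p j) - 2 * hstar h)"
      unfolding c1_def c2' by (simp add: sum.distrib[symmetric] algebra_simps)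
    ultimately have sum: "c1 + c2 \<le> \<eta>" using cost by simp
    have u1: "P1 \<le> ereal c1" unfolding P1_def \<phi>_def c1_def
      by (rule peierls_upper[OF al[unfolded \<phi>_def] a01 haa b01 hbb p(1,2) p01])
    have u2: "P2 \<le> ereal c2" unfolding P2_def \<phi>_def c2_def
      by (rule peierls_upper[OF al[unfolded \<phi>_def] b01 hbb a01 haa q])
    have l1: "ereal (- c2) \<le> P1" unfolding P1_def \<phi>_def
      by (rule peierls_lower[OF h al[unfolded \<phi>_def] a01 b01])
         (unfold c2_def, rule path_upper[OF b01 hbb a01 haa q])
    have l2: "ereal (- c1) \<le> P2" unfolding P2_def \<phi>_def
      by (rule peierls_lower[OF h al[unfolded \<phi>_def] b01 a01])
         (unfold c1_def, rule path_upper[OF a01 haa b01 hbb p(1,2) p01])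
    show ?thesis using sum u1 u2 l1 l2 by blast
  qed
  obtain c1 c2 where "P1 \<le> ereal c1" "P2 \<le> ereal c2" "ereal (- c2) \<le> P1" "ereal (- c1) \<le> P2"
    using key[of 1] by auto
  then obtain u v where uv: "P1 = ereal u" "P2 = ereal v"
    by (cases P1; cases P2) auto
  have "\<bar>u + v\<bar> \<le> \<eta>" if eta0: "\<eta> > 0" for \<eta>
  proof -
    obtain c1 c2 where c: "c1 + c2 \<le> \<eta>" "P1 \<le> ereal c1" "P2 \<le> ereal c2" "ereal (- c2) \<le> P1" "ereal (- c1) \<le> P2"
      using key[OF eta0] by blast
    hence "u \<le> c1" "v \<le> c2" "- c2 \<le> u" "- c1 \<le> v" using uv by auto
    thus ?thesis using c(1) by linarith
  qed
  hence "u + v = 0"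
  proof -
    assume A: "\<And>\<eta>. \<eta> > 0 \<Longrightarrow> \<bar>u + v\<bar> \<le> \<eta>"
    show "u + v = 0"
    proof (rule ccontr)
      assume "u + v \<noteq> 0"
      hence "\<bar>u + v\<bar> / 2 > 0" by simp
      from A[OF this] \<open>u + v \<noteq> 0\<close> show False by simp
    qed
  qed
  thus ?thesis using uv unfolding P1_def P2_def \<phi>_def by simp
qed

theorem theorem4p5:
  fixes h :: "real \<Rightarrow> real \<Rightarrow> real" and a b :: real
  assumes "h \<in> classH"
    and "a \<in> mset_h h" and "b \<in> mset_h h"
    and "b \<in> connected_component_set (mset_h h) a"
    and "\<forall>z \<in> connected_component_set (mset_h h) a.
           ((\<lambda>\<delta>. (h (z + \<delta>) z - h z z) / \<delta> + (h z (z + \<delta>) - h z z) / \<delta>) \<longlongrightarrow> 0)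
             (at_right 0)"
  shows "peierls (\<lambda>x. h (x 0) (x 1)) (const_seq a) (const_seq b)
       + peierls (\<lambda>x. h (x 0) (x 1)) (const_seq b) (const_seq a) = 0"
proof -
  define C where "C = connected_component_set (mset_h h) a"
  have aC: "a \<in> C" unfolding C_def using assms(2) by (simp add: mem_Collect_eq)
  have bC: "b \<in> C" using assms(4) unfolding C_def .
  have conC: "connected C" unfolding C_def by (rule connected_connected_component)
  have Csub: "C \<subseteq> mset_h h" unfolding C_def by (rule connected_component_subset)
  show ?thesis
  proof (cases "a \<le> b")
    case True
    have "{a..b} \<subseteq> C" by (rule connected_contains_Icc[OF conC aC bC])
    thus ?thesis using core[OF assms(1) True] Csub assms(5) unfolding C_def by blast
  next
    case False
    have "{b..a} \<subseteq> C" by (rule connected_contains_Icc[OF conC bC aC])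
    hence "peierls (\<lambda>x. h (x 0) (x 1)) (const_seq b) (const_seq a)
       + peierls (\<lambda>x. h (x 0) (x 1)) (const_seq a) (const_seq b) = 0"
      using core[OF assms(1), of b a] False Csub assms(5) unfolding C_def by auto
    thus ?thesis by (simp add: add.commute)
  qed
qed

end
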